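(* Let $K$ be a differential field of characteristic zero with a set $\Delta=\{\partial_1,\ldots,\partial_m\}$ of pairwise commuting derivations, let $R=K\{y_1,\ldots,y_n\}$, let $l\geqslant 0$, and let $J\subseteq R_l$ be an ideal. Let $p>0$ be an integer such that $(J')^p\subseteq J^{(1)}$. Then, for all integers $k\geqslant 0$, $$\sqrt{J'^{(k)}}\subseteq \sqrt{J^{(kp+1)}},$$ where the left radical is taken in $R_{l+k}$, the right radical in $R_{l+kp+1}$, and the inclusion is as subsets of $R$.
   Context: Let $\Theta=\{\partial_1^{i_1}\cdots\partial_m^{i_m} : i_j\geqslant 0\}$ and, for $\theta=\partial_1^{i_1}\cdots\partial_m^{i_m}$, let $\operatorname{ord}\theta=i_1+\cdots+i_m$. The ring of differential polynomials is $R=K\{y_1,\ldots,y_n\}=K[\theta y_i : \theta\in\Theta,\ 1\leqslant i\leqslant n]$ (a polynomial ring in the infinitely many variables $\theta y_i$, with the derivations extended by $\partial_j(\theta y_i)=(\partial_j\theta)y_i$), and for $h\geqslant 0$, $R_h=K[\theta y_i : 1\leqslant i\leqslant n,\ \operatorname{ord}\theta\leqslant h]$. For an ideal $J\subseteq R_l$ and $k\geqslant 0$, $J^{(k)}$ denotes the ideal of $R_{l+k}$ generated by $\{\theta g : g\in J,\ \theta\in\Theta,\ \operatorname{ord}\theta\leqslant k\}$. For an ideal $J\subseteq R_l$, $J'$ denotes $\sqrt{J^{(1)}}\cap R_l$, i.e. the radical in $R_{l+1}$ of the ideal generated by $\{\theta g: g\in J,\ \operatorname{ord}\theta\leqslant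 1\}$, intersected with $R_l$; $J'$ is an ideal of $R_l$, so $J'^{(k)}$ is an ideal of $R_{l+k}$. $(J')^p$ denotes the $p$-th power of the ideal $J'$. *)

theory Defs
  imports Main "HOL-Library.Poly_Mapping"
begin

text \<open>Differential polynomials over a differential field K with derivations
  indexed by the finite type 'm (so m = CARD('m)) in differential indeterminates
  indexed by the finite type 'n (so n = CARD('n)).
  A derivative operator theta = d_1^i_1 ... d_m^i_m is a function 'm => nat;
  the variable theta y_i is the pair (theta, i).
  R = K{y} is the polynomial ring (monomials => coefficients) in these variables.\<close>

type_synonym ('m, 'n) dvar = "('m \<Rightarrow> nat) \<times> 'n"
type_synonym ('k, 'm, 'n) dpoly = "((('m, 'n) dvar) \<Rightarrow>\<^sub>0 nat) \<Rightarrow>\<^sub>0 'k"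

definition diff_field :: "('m \<Rightarrow> 'k::field \<Rightarrow> 'k) \<Rightarrow> bool" where
  "diff_field D \<longleftrightarrow>
     (\<forall>j a b. D j (a + b) = D j a + D j b) \<and>
     (\<forall>j a b. D j (a * b) = D j a * b + a * D j b) \<and>
     (\<forall>i j a. D i (D j a) = D j (D i a))"

definition ord_op :: "('m::finite \<Rightarrow> nat) \<Rightarrow> nat" where
  "ord_op \<theta> = (\<Sum>j\<in>UNIV. \<theta> j)"

definition dshift :: "'m \<Rightarrow> ('m, 'n) dvar \<Rightarrow> ('m, 'n) dvar" where
  "dshift j v = ((fst v)(j := fst v j + 1), snd v)"

text \<open>Extension of the derivation D j of K to R (coefficients are differentiated,
  and the Leibniz rule is applied to monomials).\<close>
definition dderiv :: "('m \<Rightarrow> 'k::field \<Rightarrow> 'k) \<Rightarrow> 'm \<Rightarrow> ('k, 'm, 'n) dpoly \<Rightarrow> ('k, 'm, 'n) dpoly" where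
  "dderiv D j p =
     (\<Sum>(mon::('m, 'n) dvar \<Rightarrow>\<^sub>0 nat)\<in>Poly_Mapping.keys p.
        Poly_Mapping.single mon (D j (Poly_Mapping.lookup p mon)) +
        (\<Sum>v\<in>Poly_Mapping.keys mon.
           Poly_Mapping.single (mon - Poly_Mapping.single v 1 + Poly_Mapping.single (dshift j v) 1)
             (of_nat (Poly_Mapping.lookup mon v) * Poly_Mapping.lookup p mon)))"

text \<open>theta g for theta = d_{j_1} ... d_{j_r}, given as the list of directions
  (the derivations commute, so only the multiset of directions matters;
  ord theta = length of the list).\<close>
definition dapply :: "('m \<Rightarrow> 'k::field \<Rightarrow> 'k) \<Rightarrow> 'm list \<Rightarrow> ('k, 'm, 'n) dpoly \<Rightarrow> ('k, 'm, 'n) dpoly" where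
  "dapply D js p = fold (dderiv D) js p"

definition Rh :: "nat \<Rightarrow> ('k::field, 'm::finite, 'n) dpoly set" where
  "Rh h = {p. \<forall>mon\<in>Poly_Mapping.keys p. \<forall>v\<in>Poly_Mapping.keys mon. ord_op (fst v) \<le> h}"

definition is_ideal_in :: "'a::comm_ring_1 set \<Rightarrow> 'a set \<Rightarrow> bool" where
  "is_ideal_in A I \<longleftrightarrow> I \<subseteq> A \<and> 0 \<in> I \<and> (\<forall>x\<in>I. \<forall>y\<in>I. x + y \<in> I) \<and>
     (\<forall>r\<in>A. \<forall>x\<in>I. r * x \<in> I)"

definition gen_ideal :: "'a::comm_ring_1 set \<Rightarrow> 'a set \<Rightarrow> 'a set" where
  "gen_ideal A S = {x. \<exists>F r. finite F \<and> F \<subseteq> S \<and> (\<forall>s\<in>F. r s \<in> A) \<and> x = (\<Sum>s\<in>F. r s * s)}"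

definition radical_in :: "'a::comm_ring_1 set \<Rightarrow> 'a set \<Rightarrow> 'a set" where
  "radical_in A I = {x\<in>A. \<exists>k>0. x ^ k \<in> I}"

definition ideal_power_in :: "'a::comm_ring_1 set \<Rightarrow> 'a set \<Rightarrow> nat \<Rightarrow> 'a set" where
  "ideal_power_in A I p = gen_ideal A {prod_list xs | xs. length xs = p \<and> set xs \<subseteq> I}"

definition prolong :: "('m \<Rightarrow> 'k::field \<Rightarrow> 'k) \<Rightarrow> nat \<Rightarrow> ('k, 'm::finite, 'n) dpoly set \<Rightarrow> nat
    \<Rightarrow> ('k, 'm, 'n) dpoly set" where
  "prolong D l J k = gen_ideal (Rh (l + k)) {dapply D js g | js g. g \<in> J \<and> length js \<le> k}"

definition dprime :: "('m \<Rightarrow> 'k::field \<Rightarrow> 'k) \<Rightarrow> nat \<Rightarrow> ('k, 'm::finite, 'n) dpoly set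
    \<Rightarrow> ('k, 'm, 'n) dpoly set" where
  "dprime D l J = radical_in (Rh (l + 1)) (prolong D l J 1) \<inter> Rh l"

end

theory Submission
  imports Defs "HOL-Library.Multiset"
begin


lemma diff_field_D0: "diff_field D \<Longrightarrow> D j 0 = 0"
  unfolding diff_field_def by (metis add_cancel_right_right)
lemma diff_field_Dadd: "diff_field D \<Longrightarrow> D j (a + b) = D j a + D j b"
  unfolding diff_field_def by blast
lemma diff_field_Dmult: "diff_field D \<Longrightarrow> D j (a * b) = D j a * b + a * D j b"
  unfolding diff_field_def by blast
lemma diff_field_D1: "diff_field D \<Longrightarrow> D j 1 = 0"
proof -
  assume "diff_field D"
  from diff_field_Dmult[OF this, of j 1 1] have "D j 1 = D j 1 + D j 1" by simp
  then show ?thesis by (metis add_cancel_left_right)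
qed

definition Tm :: "('m \<Rightarrow> 'k::field \<Rightarrow> 'k) \<Rightarrow> 'm \<Rightarrow> (('m, 'n) dvar \<Rightarrow>\<^sub>0 nat) \<Rightarrow> 'k \<Rightarrow> ('k, 'm, 'n) dpoly" where
  "Tm D j mon c = Poly_Mapping.single mon (D j c) +
        (\<Sum>v\<in>Poly_Mapping.keys mon.
           Poly_Mapping.single (mon - Poly_Mapping.single v 1 + Poly_Mapping.single (dshift j v) 1)
             (of_nat (Poly_Mapping.lookup mon v) * c))"

lemma dderiv_Tm: "dderiv D j p = (\<Sum>mon\<in>Poly_Mapping.keys p. Tm D j mon (Poly_Mapping.lookup p mon))"
  unfolding dderiv_def Tm_def ..

lemma Tm_0: "diff_field D \<Longrightarrow> Tm D j mon 0 = 0"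
  by (simp add: Tm_def diff_field_D0)

lemma Tm_add: "diff_field D \<Longrightarrow> Tm D j mon (a + b) = Tm D j mon a + Tm D j mon b"
  by (simp add: Tm_def diff_field_Dadd single_add distrib_left sum.distrib algebra_simps)

lemma dderiv_superset:
  assumes "diff_field D" "finite S" "Poly_Mapping.keys p \<subseteq> S"
  shows "dderiv D j p = (\<Sum>mon\<in>S. Tm D j mon (Poly_Mapping.lookup p mon))"
  unfolding dderiv_Tm
  by (rule sum.mono_neutral_left) (use assms in \<open>auto simp: Tm_0 in_keys_iff\<close>)

lemma dderiv_add:
  assumes "diff_field D"
  shows "dderiv D j (p + q) = dderiv D j p + dderiv D j q"
proof -
  let ?S = "Poly_Mapping.keys p \<union> Poly_Mapping.keys q"
  have "dderiv D j (p + q) = (\<Sum>mon\<in>?S. Tm D j mon (Poly_Mapping.lookup (p+q) mon))"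
    using keys_add[of p q] by (intro dderiv_superset assms) auto
  also have "\<dots> = (\<Sum>mon\<in>?S. Tm D j mon (Poly_Mapping.lookup p mon)) + (\<Sum>mon\<in>?S. Tm D j mon (Poly_Mapping.lookup q mon))"
    by (simp add: lookup_add Tm_add[OF assms] sum.distrib)
  also have "\<dots> = dderiv D j p + dderiv D j q"
    by (subst (1 2) dderiv_superset[OF assms]) auto
  finally show ?thesis .
qed

lemma dderiv_zero: "diff_field D \<Longrightarrow> dderiv D j 0 = 0"
  by (simp add: dderiv_def)

lemma dderiv_sum: "diff_field D \<Longrightarrow> dderiv D j (\<Sum>i\<in>A. f i) = (\<Sum>i\<in>A. dderiv D j (f i))"
  by (induction A rule: infinite_finite_induct) (auto simp: dderiv_zero dderiv_add)

lemma dderiv_uminus: "diff_field D \<Longrightarrow> dderiv D j (- p) = - dderiv D j p"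
  using dderiv_add[of D j p "-p"] by (simp add: dderiv_zero eq_neg_iff_add_eq_0 add.commute)

lemma dderiv_diff: "diff_field D \<Longrightarrow> dderiv D j (p - q) = dderiv D j p - dderiv D j q"
  using dderiv_add[of D j p "-q"] dderiv_uminus[of D j q] by simp

lemma dderiv_single: "diff_field D \<Longrightarrow> dderiv D j (Poly_Mapping.single m c) = Tm D j m c"
  by (subst dderiv_superset[of D "{m}"]) auto

lemma poly_sum_singles: "p = (\<Sum>m\<in>Poly_Mapping.keys p. Poly_Mapping.single m (Poly_Mapping.lookup p m))"
  by (rule poly_mapping_eqI) (simp add: lookup_sum lookup_single when_def in_keys_iff sum.delta' split: if_splits)


abbreviation Ev :: "'m \<Rightarrow> (('m, 'n) dvar \<Rightarrow>\<^sub>0 nat) \<Rightarrow> ('m, 'n) dvar \<Rightarrow> (('m, 'n) dvar \<Rightarrow>\<^sub>0 nat)" where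
  "Ev j m v \<equiv> m - Poly_Mapping.single v 1 + Poly_Mapping.single (dshift j v) 1"

lemma Ev_add: "v \<in> Poly_Mapping.keys m \<Longrightarrow> Ev j m v + n = Ev j (m + n) v"
  by (rule poly_mapping_eqI) (auto simp: lookup_add lookup_minus lookup_single when_def in_keys_iff)

lemma keys_add_nat: "Poly_Mapping.keys ((m::'a \<Rightarrow>\<^sub>0 nat) + n) = Poly_Mapping.keys m \<union> Poly_Mapping.keys n"
  by (auto simp: in_keys_iff lookup_add)

lemma sum_keys_shrink:
  fixes m n :: "('m, 'n) dvar \<Rightarrow>\<^sub>0 nat"
  assumes "Poly_Mapping.keys m \<subseteq> S" "finite S"
  shows "(\<Sum>v\<in>S. Poly_Mapping.single (F v) (of_nat (Poly_Mapping.lookup m v) * (c::'k::field)))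
       = (\<Sum>v\<in>Poly_Mapping.keys m. Poly_Mapping.single (F v) (of_nat (Poly_Mapping.lookup m v) * c))"
  by (rule sum.mono_neutral_right) (use assms in \<open>auto simp: in_keys_iff\<close>)

lemma Tm_mult:
  assumes "diff_field D"
  shows "Tm D j (m + n) (a * b) = Tm D j m a * Poly_Mapping.single n b + Poly_Mapping.single m a * Tm D j n b"
proof -
  have A: "(\<Sum>v\<in>Poly_Mapping.keys m. Poly_Mapping.single (Ev j m v) (of_nat (Poly_Mapping.lookup m v) * a)) * Poly_Mapping.single n b
      = (\<Sum>v\<in>Poly_Mapping.keys m. Poly_Mapping.single (Ev j (m+n) v) (of_nat (Poly_Mapping.lookup m v) * (a * b)))"
    unfolding sum_distrib_right mult_single
    by (rule sum.cong[OF refl], subst Ev_add, assumption, simp add: mult.assoc)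
  have B: "Poly_Mapping.single m a * (\<Sum>v\<in>Poly_Mapping.keys n. Poly_Mapping.single (Ev j n v) (of_nat (Poly_Mapping.lookup n v) * b))
      = (\<Sum>v\<in>Poly_Mapping.keys n. Poly_Mapping.single (Ev j (m+n) v) (of_nat (Poly_Mapping.lookup n v) * (a * b)))"
    unfolding sum_distrib_left mult_single
    by (rule sum.cong[OF refl], subst add.commute, subst Ev_add, assumption, simp add: add.commute mult.commute mult.left_commute mult.assoc)
  have C: "(\<Sum>v\<in>Poly_Mapping.keys (m+n). Poly_Mapping.single (Ev j (m+n) v) (of_nat (Poly_Mapping.lookup (m+n) v) * (a * b)))
     = (\<Sum>v\<in>Poly_Mapping.keys (m+n). Poly_Mapping.single (Ev j (m+n) v) (of_nat (Poly_Mapping.lookup m v) * (a * b)))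
     + (\<Sum>v\<in>Poly_Mapping.keys (m+n). Poly_Mapping.single (Ev j (m+n) v) (of_nat (Poly_Mapping.lookup n v) * (a * b)))"
    by (simp add: lookup_add distrib_right single_add sum.distrib)
  also have "\<dots> = (\<Sum>v\<in>Poly_Mapping.keys m. Poly_Mapping.single (Ev j (m+n) v) (of_nat (Poly_Mapping.lookup m v) * (a * b)))
     + (\<Sum>v\<in>Poly_Mapping.keys n. Poly_Mapping.single (Ev j (m+n) v) (of_nat (Poly_Mapping.lookup n v) * (a * b)))"
    by (subst (1 2) sum_keys_shrink) (auto simp: keys_add_nat)
  finally have C': "(\<Sum>v\<in>Poly_Mapping.keys (m+n). Poly_Mapping.single (Ev j (m+n) v) (of_nat (Poly_Mapping.lookup (m+n) v) * (a * b)))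
     = (\<Sum>v\<in>Poly_Mapping.keys m. Poly_Mapping.single (Ev j (m+n) v) (of_nat (Poly_Mapping.lookup m v) * (a * b)))
     + (\<Sum>v\<in>Poly_Mapping.keys n. Poly_Mapping.single (Ev j (m+n) v) (of_nat (Poly_Mapping.lookup n v) * (a * b)))" .
  show ?thesis
    unfolding Tm_def distrib_right distrib_left A B C' mult_single
    by (simp add: diff_field_Dmult[OF assms] single_add mult.commute)
qed

lemma dderiv_mult:
  assumes "diff_field D"
  shows "dderiv D j (p * q) = dderiv D j p * q + p * dderiv D j q"
proof -
  let ?P = "\<lambda>m. Poly_Mapping.single m (Poly_Mapping.lookup p m)"
  let ?Q = "\<lambda>m. Poly_Mapping.single m (Poly_Mapping.lookup q m)"
  have pq: "p * q = (\<Sum>m\<in>Poly_Mapping.keys p. \<Sum>n\<in>Poly_Mapping.keys q. ?P m * ?Q n)"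
    by (subst (1 2) poly_sum_singles) (simp add: sum_product)
  have dp: "dderiv D j p = (\<Sum>m\<in>Poly_Mapping.keys p. dderiv D j (?P m))"
    by (subst poly_sum_singles) (simp add: dderiv_sum[OF assms])
  have dq: "dderiv D j q = (\<Sum>m\<in>Poly_Mapping.keys q. dderiv D j (?Q m))"
    by (subst poly_sum_singles) (simp add: dderiv_sum[OF assms])
  have "dderiv D j (p * q) = (\<Sum>m\<in>Poly_Mapping.keys p. \<Sum>n\<in>Poly_Mapping.keys q. dderiv D j (?P m) * ?Q n + ?P m * dderiv D j (?Q n))"
    unfolding pq by (simp add: dderiv_sum[OF assms] mult_single dderiv_single[OF assms] Tm_mult[OF assms])
  also have "\<dots> = dderiv D j p * q + p * dderiv D j q"
    unfolding dp dq by (subst (3 4) poly_sum_singles) (simp add: sum.distrib sum_product)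
  finally show ?thesis .
qed


lemma single_single_pow:
  "(Poly_Mapping.single (Poly_Mapping.single a (1::nat)) (1::'k::comm_ring_1)) ^ b
     = Poly_Mapping.single (Poly_Mapping.single a b) 1"
  by (induction b) (simp_all add: mult_single single_add[symmetric] add.commute)

lemma update_as_add: "a \<notin> Poly_Mapping.keys f \<Longrightarrow> Poly_Mapping.update a b f = f + Poly_Mapping.single a b"
  by (rule poly_mapping_eqI) (auto simp: lookup_update lookup_add lookup_single when_def in_keys_iff)

lemma deriv_vanish:
  fixes \<delta> :: "('k::comm_ring_1, 'm, 'n) dpoly \<Rightarrow> ('k, 'm, 'n) dpoly"
  assumes add: "\<And>p q. \<delta> (p + q) = \<delta> p + \<delta> q"
    and mult: "\<And>p q. \<delta> (p * q) = \<delta> p * q + p * \<delta> q"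
    and const: "\<And>c. \<delta> (Poly_Mapping.single 0 c) = 0"
    and var: "\<And>v. \<delta> (Poly_Mapping.single (Poly_Mapping.single v 1) 1) = 0"
  shows "\<delta> p = 0"
proof -
  have z: "\<delta> 0 = 0" using add[of 0 0] by simp
  have s: "\<delta> (sum f A) = sum (\<lambda>i. \<delta> (f i)) A" for f and A :: "'x set"
    by (induction A rule: infinite_finite_induct) (auto simp: z add)
  have o1: "Poly_Mapping.single 0 (1::'k) = (1 :: ('k,'m,'n) dpoly)" by simp
  have one: "\<delta> 1 = 0" using const[of 1] unfolding o1 .
  have pw: "\<delta> x = 0 \<Longrightarrow> \<delta> (x ^ b) = 0" for x b
    by (induction b) (auto simp: mult one)
  have mon: "\<delta> (Poly_Mapping.single m 1) = 0" for m
  proof (induction m rule: update_induct)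
    case const
    then show ?case using one by simp
  next
    case (update f a b)
    have "Poly_Mapping.single (Poly_Mapping.update a b f) (1::'k)
        = Poly_Mapping.single f 1 * (Poly_Mapping.single (Poly_Mapping.single a 1) 1) ^ b"
      unfolding update_as_add[OF update(1)] single_single_pow mult_single by simp
    then show ?case using update(3) pw[OF var] by (simp only: mult) simp
  qed
  have "\<delta> (Poly_Mapping.single m c) = 0" for m c
  proof -
    have "Poly_Mapping.single m c = Poly_Mapping.single 0 c * Poly_Mapping.single m 1"
      by (simp add: mult_single)
    then show ?thesis by (simp add: mult const mon)
  qed
  then show ?thesis
    by (subst poly_sum_singles) (simp add: s)
qed

lemma dderiv_const: "diff_field D \<Longrightarrow> dderiv D j (Poly_Mapping.single 0 c) = Poly_Mapping.single 0 (D j c)"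
  by (simp add: dderiv_single Tm_def)

lemma dderiv_var: "diff_field D \<Longrightarrow> dderiv D j (Poly_Mapping.single (Poly_Mapping.single v 1) 1)
    = Poly_Mapping.single (Poly_Mapping.single (dshift j v) 1) 1"
  by (simp add: dderiv_single Tm_def diff_field_D1)

lemma dshift_comm: "dshift i (dshift j v) = dshift j (dshift i v)"
  by (cases "i = j") (auto simp: dshift_def fun_upd_twist)

lemma dderiv_comm:
  assumes "diff_field D"
  shows "dderiv D i (dderiv D j p) = dderiv D j (dderiv D i p)"
proof -
  let ?d = "\<lambda>p. dderiv D i (dderiv D j p) - dderiv D j (dderiv D i p)"
  have "?d p = 0"
  proof (rule deriv_vanish[where \<delta> = ?d])
    show "?d (p + q) = ?d p + ?d q" for p q by (simp add: dderiv_add[OF assms])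
    show "?d (p * q) = ?d p * q + p * ?d q" for p q
      by (simp add: dderiv_add[OF assms] dderiv_mult[OF assms] algebra_simps)
    show "?d (Poly_Mapping.single 0 c) = 0" for c
      using assms by (simp add: dderiv_const diff_field_def)
    show "?d (Poly_Mapping.single (Poly_Mapping.single v 1) 1) = 0" for v
      by (simp only: dderiv_var[OF assms] dshift_comm) simp
  qed
  then show ?thesis by simp
qed

lemma dapply_mset:
  assumes "diff_field D" "mset xs = mset ys"
  shows "dapply D xs p = dapply D ys p"
  unfolding dapply_def
  by (subst fold_multiset_equiv[OF _ assms(2)]) (auto simp: fun_eq_iff dderiv_comm[OF assms(1)])


definition subring :: "'a::comm_ring_1 set \<Rightarrow> bool" where
  "subring A \<longleftrightarrow> 0 \<in> A \<and> 1 \<in> A \<and> (\<forall>x\<in>A. \<forall>y\<in>A. x + y \<in> A \<and> x * y \<in> A) \<and> (\<forall>x\<in>A. - x \<in> A)"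

lemma subring_0: "subring A \<Longrightarrow> 0 \<in> A" and subring_1: "subring A \<Longrightarrow> 1 \<in> A"
  and subring_add: "subring A \<Longrightarrow> x \<in> A \<Longrightarrow> y \<in> A \<Longrightarrow> x + y \<in> A"
  and subring_mult: "subring A \<Longrightarrow> x \<in> A \<Longrightarrow> y \<in> A \<Longrightarrow> x * y \<in> A"
  and subring_uminus: "subring A \<Longrightarrow> x \<in> A \<Longrightarrow> - x \<in> A"
  by (auto simp: subring_def)

lemma subring_power: "subring A \<Longrightarrow> x \<in> A \<Longrightarrow> x ^ n \<in> A"
  by (induction n) (auto intro: subring_1 subring_mult)

lemma subring_of_nat: "subring A \<Longrightarrow> of_nat n \<in> A"
  by (induction n) (auto intro: subring_0 subring_1 subring_add)

lemma subring_sum: "subring A \<Longrightarrow> (\<And>i. i \<in> F \<Longrightarrow> f i \<in> A) \<Longrightarrow> sum f F \<in> A"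
  by (induction F rule: infinite_finite_induct) (auto intro: subring_0 subring_add)

lemma ideal_sub: "is_ideal_in A I \<Longrightarrow> I \<subseteq> A" and ideal_0: "is_ideal_in A I \<Longrightarrow> 0 \<in> I"
  and ideal_add: "is_ideal_in A I \<Longrightarrow> x \<in> I \<Longrightarrow> y \<in> I \<Longrightarrow> x + y \<in> I"
  and ideal_mult: "is_ideal_in A I \<Longrightarrow> r \<in> A \<Longrightarrow> x \<in> I \<Longrightarrow> r * x \<in> I"
  by (auto simp: is_ideal_in_def)

lemma ideal_mult2: "is_ideal_in A I \<Longrightarrow> r \<in> A \<Longrightarrow> x \<in> I \<Longrightarrow> x * r \<in> I"
  using ideal_mult by (metis mult.commute)

lemma ideal_sum: "is_ideal_in A I \<Longrightarrow> (\<And>i. i \<in> F \<Longrightarrow> f i \<in> I) \<Longrightarrow> sum f F \<in> I"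
  by (induction F rule: infinite_finite_induct) (auto intro: ideal_0 ideal_add)

lemma ideal_uminus: "subring A \<Longrightarrow> is_ideal_in A I \<Longrightarrow> x \<in> I \<Longrightarrow> - x \<in> I"
proof -
  assume A: "subring A" and I: "is_ideal_in A I" and x: "x \<in> I"
  have m: "- 1 \<in> A" by (rule subring_uminus[OF A subring_1[OF A]])
  have "- x = (- 1) * x" by simp
  then show "- x \<in> I" using ideal_mult[OF I m x] by simp
qed

lemma ideal_diff: "subring A \<Longrightarrow> is_ideal_in A I \<Longrightarrow> x \<in> I \<Longrightarrow> y \<in> I \<Longrightarrow> x - y \<in> I"
  using ideal_add[of A I x "-y"] ideal_uminus[of A I y] by auto

lemma ideal_power: "subring A \<Longrightarrow> is_ideal_in A I \<Longrightarrow> x \<in> I \<Longrightarrow> n > 0 \<Longrightarrow> x ^ n \<in> I"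
proof (induction n)
  case 0 then show ?case by simp
next
  case (Suc n)
  show ?case
  proof (cases "n = 0")
    case True then show ?thesis using Suc.prems(3) by simp
  next
    case False
    then have "x ^ n \<in> I" using Suc by simp
    moreover have "x \<in> A" using ideal_sub[OF Suc.prems(2)] Suc.prems(3) by (rule subsetD)
    ultimately show ?thesis using ideal_mult[OF Suc.prems(2)] by simp
  qed
qed

lemma gen_ideal_elim:
  assumes "x \<in> gen_ideal A S"
  obtains F r where "finite F" "F \<subseteq> S" "\<And>s. s \<in> F \<Longrightarrow> r s \<in> A" "x = (\<Sum>s\<in>F. r s * s)"
proof -
  from assms obtain F r where F: "finite F" "F \<subseteq> S" "\<forall>s\<in>F. r s \<in> A" "x = (\<Sum>s\<in>F. r s * s)"
    unfolding gen_ideal_def by blast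
  show thesis by (rule that[OF F(1,2) bspec[OF F(3)] F(4)])
qed

lemma gen_ideal_intro:
  "finite F \<Longrightarrow> F \<subseteq> S \<Longrightarrow> (\<And>s. s \<in> F \<Longrightarrow> r s \<in> A) \<Longrightarrow> (\<Sum>s\<in>F. r s * s) \<in> gen_ideal A S"
  unfolding gen_ideal_def by blast

lemma gen_ideal_sub: "subring A \<Longrightarrow> S \<subseteq> A \<Longrightarrow> gen_ideal A S \<subseteq> A"
proof
  fix x assume A: "subring A" and S: "S \<subseteq> A" and x: "x \<in> gen_ideal A S"
  from x obtain F r where F: "finite F" "F \<subseteq> S" "\<forall>s\<in>F. r s \<in> A" "x = (\<Sum>s\<in>F. r s * s)"
    unfolding gen_ideal_def by blast
  have "r s * s \<in> A" if "s \<in> F" for s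
  proof (rule subring_mult[OF A])
    show "r s \<in> A" using F(3) that by (rule bspec)
    show "s \<in> A" using S F(2) that by (meson subsetD)
  qed
  then show "x \<in> A" unfolding F(4) by (rule subring_sum[OF A])
qed

lemma gen_ideal_superset: "subring A \<Longrightarrow> S \<subseteq> gen_ideal A S"
proof
  fix s assume A: "subring A" and s: "s \<in> S"
  have "(\<Sum>t\<in>{s}. (\<lambda>_. 1) t * t) \<in> gen_ideal A S"
    by (rule gen_ideal_intro) (use s subring_1[OF A] in auto)
  then show "s \<in> gen_ideal A S" by simp
qed

lemma gen_ideal_mono: "A \<subseteq> B \<Longrightarrow> S \<subseteq> T \<Longrightarrow> gen_ideal A S \<subseteq> gen_ideal B T"
proof
  fix x assume AB: "A \<subseteq> B" and ST: "S \<subseteq> T" and x: "x \<in> gen_ideal A S"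
  from x obtain F r where F: "finite F" "F \<subseteq> S" "\<forall>s\<in>F. r s \<in> A" "x = (\<Sum>s\<in>F. r s * s)"
    unfolding gen_ideal_def by blast
  have "(\<Sum>s\<in>F. r s * s) \<in> gen_ideal B T"
  proof (rule gen_ideal_intro[OF F(1)])
    show "F \<subseteq> T" using F(2) ST by (rule order_trans)
    fix s assume "s \<in> F" then have "r s \<in> A" using F(3) by (simp only:)
    then show "r s \<in> B" using AB by (rule subsetD[rotated])
  qed
  then show "x \<in> gen_ideal B T" unfolding F(4) .
qed

lemma gen_ideal_least: "is_ideal_in A I \<Longrightarrow> S \<subseteq> I \<Longrightarrow> gen_ideal A S \<subseteq> I"
proof
  fix x assume I: "is_ideal_in A I" and S: "S \<subseteq> I" and x: "x \<in> gen_ideal A S"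
  from x obtain F r where F: "finite F" "F \<subseteq> S" "\<forall>s\<in>F. r s \<in> A" "x = (\<Sum>s\<in>F. r s * s)"
    unfolding gen_ideal_def by blast
  have "r s * s \<in> I" if "s \<in> F" for s
  proof (rule ideal_mult[OF I])
    show "r s \<in> A" using F(3) that by (rule bspec)
    show "s \<in> I" using S F(2) that by (meson subsetD)
  qed
  then show "x \<in> I" unfolding F(4) by (rule ideal_sum[OF I])
qed

lemma gen_ideal_ideal:
  assumes A: "subring A" and S: "S \<subseteq> A"
  shows "is_ideal_in A (gen_ideal A S)"
  unfolding is_ideal_in_def
proof (intro conjI ballI)
  show "gen_ideal A S \<subseteq> A" by (rule gen_ideal_sub[OF A S])
  show "0 \<in> gen_ideal A S" unfolding gen_ideal_def by (intro CollectI exI[of _ "{}"]) auto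
next
  fix x y assume x: "x \<in> gen_ideal A S" and y: "y \<in> gen_ideal A S"
  from x obtain F r where F: "finite F" "F \<subseteq> S" "\<forall>s\<in>F. r s \<in> A" "x = (\<Sum>s\<in>F. r s * s)"
    unfolding gen_ideal_def by blast
  from y obtain G q where G: "finite G" "G \<subseteq> S" "\<forall>s\<in>G. q s \<in> A" "y = (\<Sum>s\<in>G. q s * s)"
    unfolding gen_ideal_def by blast
  define r' where "r' s = (if s \<in> F then r s else 0)" for s
  define q' where "q' s = (if s \<in> G then q s else 0)" for s
  have "x = (\<Sum>s\<in>F \<union> G. r' s * s)"
    unfolding F(4) r'_def by (rule sum.mono_neutral_cong_left) (use F G in auto)
  moreover have "y = (\<Sum>s\<in>F \<union> G. q' s * s)"
    unfolding G(4) q'_def by (rule sum.mono_neutral_cong_left) (use F G in auto)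
  ultimately have "x + y = (\<Sum>s\<in>F \<union> G. (r' s + q' s) * s)"
    by (simp add: sum.distrib distrib_right)
  moreover have "\<forall>s\<in>F \<union> G. r' s + q' s \<in> A"
    using F G A by (auto simp: r'_def q'_def intro!: subring_add subring_0)
  ultimately show "x + y \<in> gen_ideal A S"
    unfolding gen_ideal_def using F G by (intro CollectI exI[of _ "F \<union> G"] exI[of _ "\<lambda>s. r' s + q' s"]) auto
next
  fix r x assume r: "r \<in> A" and x: "x \<in> gen_ideal A S"
  from x obtain F c where F: "finite F" "F \<subseteq> S" "\<forall>s\<in>F. c s \<in> A" "x = (\<Sum>s\<in>F. c s * s)"
    unfolding gen_ideal_def by blast
  have "r * x = (\<Sum>s\<in>F. (r * c s) * s)" by (simp add: F(4) sum_distrib_left mult.assoc)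
  then show "r * x \<in> gen_ideal A S"
    unfolding gen_ideal_def using F r A by (intro CollectI exI[of _ F] exI[of _ "\<lambda>s. r * c s"]) (auto intro: subring_mult)
qed

lemma radical_sub: "is_ideal_in A I \<Longrightarrow> I \<subseteq> radical_in A I"
proof
  fix x assume I: "is_ideal_in A I" and x: "x \<in> I"
  have "x \<in> A" using ideal_sub[OF I] x by (rule subsetD)
  moreover have "x ^ 1 \<in> I" using x by simp
  ultimately show "x \<in> radical_in A I" unfolding radical_in_def by blast
qed

lemma radical_radical: "radical_in A (radical_in A I) \<subseteq> radical_in A I"
proof
  fix x assume "x \<in> radical_in A (radical_in A I)"
  then obtain a where a: "x \<in> A" "a > 0" "x ^ a \<in> radical_in A I" unfolding radical_in_def by blast
  then obtain b where b: "b > 0" "(x ^ a) ^ b \<in> I" unfolding radical_in_def by blast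
  have "x ^ (a * b) \<in> I" using b(2) by (simp add: power_mult)
  moreover have "a * b > 0" using a(2) b(1) by simp
  ultimately show "x \<in> radical_in A I" unfolding radical_in_def using a(1) by blast
qed

lemma radical_ideal:
  assumes A: "subring A" and I: "is_ideal_in A I"
  shows "is_ideal_in A (radical_in A I)"
  unfolding is_ideal_in_def
proof (intro conjI ballI)
  show "radical_in A I \<subseteq> A" by (auto simp: radical_in_def)
  show "0 \<in> radical_in A I" using subring_0[OF A] ideal_0[OF I] by (auto simp: radical_in_def intro!: exI[of _ 1])
next
  fix x y assume "x \<in> radical_in A I" "y \<in> radical_in A I"
  then obtain a b where x: "x \<in> A" "a > 0" "x ^ a \<in> I" and y: "y \<in> A" "b > 0" "y ^ b \<in> I"
    unfolding radical_in_def by blast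
  have "(x + y) ^ (a + b) = (\<Sum>k\<le>a+b. of_nat ((a+b) choose k) * x ^ k * y ^ (a + b - k))"
    by (rule binomial_ring)
  also have "\<dots> \<in> I"
  proof (rule ideal_sum[OF I])
    fix k assume "k \<in> {..a+b}"
    show "of_nat ((a+b) choose k) * x ^ k * y ^ (a + b - k) \<in> I"
    proof (cases "k \<ge> a")
      case True
      then have "x ^ k = x ^ a * x ^ (k - a)" by (simp add: power_add[symmetric])
      then have e: "of_nat ((a+b) choose k) * x ^ k * y ^ (a + b - k) = (of_nat ((a+b) choose k) * x ^ (k - a) * y ^ (a + b - k)) * x ^ a"
        by (simp add: ac_simps)
      show ?thesis unfolding e
        by (rule ideal_mult[OF I _ x(3)]) (intro subring_mult subring_of_nat subring_power A x y)
    next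
      case False
      then have "y ^ (a + b - k) = y ^ b * y ^ (a - k)" by (simp add: power_add[symmetric] add.commute)
      then have e: "of_nat ((a+b) choose k) * x ^ k * y ^ (a + b - k) = (of_nat ((a+b) choose k) * x ^ k * y ^ (a - k)) * y ^ b"
        by (simp add: ac_simps)
      show ?thesis unfolding e
        by (rule ideal_mult[OF I _ y(3)]) (intro subring_mult subring_of_nat subring_power A x y)
    qed
  qed
  finally show "x + y \<in> radical_in A I"
    using x y A unfolding radical_in_def by (auto intro: subring_add)
next
  fix r x assume r: "r \<in> A" and "x \<in> radical_in A I"
  then obtain a where x: "x \<in> A" "a > 0" "x ^ a \<in> I" unfolding radical_in_def by blast
  then have "(r * x) ^ a \<in> I" using A I r by (auto simp: power_mult_distrib intro: ideal_mult subring_power)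
  then show "r * x \<in> radical_in A I" unfolding radical_in_def using x r A by (auto intro: subring_mult)
qed

lemma radical_mono:
  "A \<subseteq> B \<Longrightarrow> I \<subseteq> I' \<Longrightarrow> radical_in A I \<subseteq> radical_in B I'"
  unfolding radical_in_def by blast


definition goodm :: "nat \<Rightarrow> (('m::finite, 'n) dvar \<Rightarrow>\<^sub>0 nat) \<Rightarrow> bool" where
  "goodm h mon \<longleftrightarrow> (\<forall>v\<in>Poly_Mapping.keys mon. ord_op (fst v) \<le> h)"

lemma Rh_iff: "p \<in> Rh h \<longleftrightarrow> (\<forall>mon\<in>Poly_Mapping.keys p. goodm h mon)"
  by (simp add: Rh_def goodm_def)

lemma Rh_mono: "h \<le> h' \<Longrightarrow> Rh h \<subseteq> Rh h'"
  unfolding Rh_def using le_trans by blast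

lemma Rh_subring: "subring (Rh h :: ('k::field, 'm::finite, 'n) dpoly set)"
  unfolding subring_def
proof (intro conjI ballI)
  show "0 \<in> Rh h" "1 \<in> Rh h" by (auto simp: Rh_def)
  fix x y :: "('k, 'm, 'n) dpoly" assume x: "x \<in> Rh h" and y: "y \<in> Rh h"
  show "x + y \<in> Rh h" using x y keys_add[of x y] by (auto simp: Rh_def)
  show "x * y \<in> Rh h"
    unfolding Rh_def
  proof (intro CollectI ballI)
    fix mon v assume "mon \<in> Poly_Mapping.keys (x * y)" "v \<in> Poly_Mapping.keys mon"
    then obtain a b where "a \<in> Poly_Mapping.keys x" "b \<in> Poly_Mapping.keys y" "mon = a + b"
        "v \<in> Poly_Mapping.keys (a + b)"
      using keys_mult[of x y] by blast
    then show "ord_op (fst v) \<le> h" using x y by (auto simp: Rh_def keys_add_nat)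
  qed
next
  fix x :: "('k, 'm, 'n) dpoly" assume x: "x \<in> Rh h"
  then show "- x \<in> Rh h" by (simp add: Rh_def)
qed

lemma Rh_single0: "Poly_Mapping.single 0 c \<in> Rh h"
  by (simp add: Rh_def)

lemma ord_dshift: "ord_op (fst (dshift j v)) = Suc (ord_op (fst v))"
proof -
  have "(fst v)(j := fst v j + 1) = (\<lambda>x. fst v x + (if x = j then 1 else 0))" by auto
  then show ?thesis unfolding ord_op_def dshift_def by (simp add: sum.distrib)
qed

lemma keys_Ev: "Poly_Mapping.keys (Ev j m v) \<subseteq> Poly_Mapping.keys m \<union> {dshift j v}"
proof
  fix u assume u: "u \<in> Poly_Mapping.keys (Ev j m v)"
  show "u \<in> Poly_Mapping.keys m \<union> {dshift j v}"
  proof (cases "u = dshift j v")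
    case False
    then have "Poly_Mapping.lookup m u - (1 when v = u) \<noteq> 0"
      using u by (simp add: in_keys_iff lookup_add lookup_minus lookup_single)
    then show ?thesis by (simp add: in_keys_iff)
  qed simp
qed

lemma in_keys_single: "x \<in> Poly_Mapping.keys (Poly_Mapping.single k c) \<Longrightarrow> x = k"
  by (simp only: keys_single split: if_splits) auto

lemma goodm_Suc: "goodm h m \<Longrightarrow> goodm (Suc h) m"
  unfolding goodm_def using le_SucI by blast

lemma dderiv_Rh:
  assumes "p \<in> Rh h"
  shows "dderiv D j p \<in> Rh (Suc h)"
proof -
  have "goodm (Suc h) mon'" if "mon' \<in> Poly_Mapping.keys (dderiv D j p)" for mon'
  proof -
    have "mon' \<in> (\<Union>mon\<in>Poly_Mapping.keys p. Poly_Mapping.keys (Tm D j mon (Poly_Mapping.lookup p mon)))"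
      using that keys_sum[of "\<lambda>mon. Tm D j mon (Poly_Mapping.lookup p mon)" "Poly_Mapping.keys p"]
      unfolding dderiv_Tm by (rule subsetD[rotated])
    then obtain mon where mon: "mon \<in> Poly_Mapping.keys p"
      "mon' \<in> Poly_Mapping.keys (Tm D j mon (Poly_Mapping.lookup p mon))"
      by (rule UN_E)
    have gm: "goodm h mon" using assms mon(1) unfolding Rh_iff by blast
    let ?c = "Poly_Mapping.lookup p mon"
    let ?g = "\<lambda>v. Poly_Mapping.single (Ev j mon v) (of_nat (Poly_Mapping.lookup mon v) * ?c)"
    have k1: "Poly_Mapping.keys (Tm D j mon ?c) \<subseteq> Poly_Mapping.keys (Poly_Mapping.single mon (D j ?c)) \<union> Poly_Mapping.keys (sum ?g (Poly_Mapping.keys mon))"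
      unfolding Tm_def by (rule keys_add)
    have k2: "Poly_Mapping.keys (sum ?g (Poly_Mapping.keys mon)) \<subseteq> (\<Union>v\<in>Poly_Mapping.keys mon. Poly_Mapping.keys (?g v))"
      by (rule keys_sum)
    from subsetD[OF k1 mon(2)] show ?thesis
    proof (rule UnE)
      assume "mon' \<in> Poly_Mapping.keys (Poly_Mapping.single mon (D j ?c))"
      then have "mon' = mon" by (rule in_keys_single)
      then show ?thesis using goodm_Suc[OF gm] by simp
    next
      assume "mon' \<in> Poly_Mapping.keys (sum ?g (Poly_Mapping.keys mon))"
      from subsetD[OF k2 this] obtain v where v: "v \<in> Poly_Mapping.keys mon" "mon' \<in> Poly_Mapping.keys (?g v)"
        by (rule UN_E)
      from v(2) have mv: "mon' = Ev j mon v" by (rule in_keys_single)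
      show ?thesis unfolding goodm_def
      proof
        fix u assume "u \<in> Poly_Mapping.keys mon'"
        then have "u \<in> Poly_Mapping.keys (Ev j mon v)" by (simp only: mv)
        then have "u \<in> Poly_Mapping.keys mon \<union> {dshift j v}" by (rule subsetD[OF keys_Ev])
        then show "ord_op (fst u) \<le> Suc h"
        proof (rule UnE)
          assume "u \<in> Poly_Mapping.keys mon" then show ?thesis using goodm_Suc[OF gm] unfolding goodm_def by (rule bspec[rotated])
        next
          assume "u \<in> {dshift j v}"
          then have "u = dshift j v" by (rule singletonD)
          moreover have "ord_op (fst v) \<le> h" using gm v(1) unfolding goodm_def by (rule bspec)
          ultimately show ?thesis by (simp only: ord_dshift Suc_le_mono)
        qed
      qed
    qed
  qed
  then show ?thesis unfolding Rh_iff by blast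
qed

lemma dapply_snoc: "dapply D (js @ [j]) p = dderiv D j (dapply D js p)"
  by (simp add: dapply_def)

lemma dapply_Nil [simp]: "dapply D [] p = p"
  by (simp add: dapply_def)

lemma dapply_Rh: "p \<in> Rh h \<Longrightarrow> dapply D js p \<in> Rh (h + length js)"
  by (induction js rule: rev_induct) (auto simp: dapply_snoc intro: dderiv_Rh)


definition Sg :: "('m \<Rightarrow> 'k::field \<Rightarrow> 'k) \<Rightarrow> ('k, 'm::finite, 'n) dpoly set \<Rightarrow> nat \<Rightarrow> ('k, 'm, 'n) dpoly set" where
  "Sg D J t = {dapply D js g | js g. g \<in> J \<and> length js \<le> t}"

lemma prolong_Sg: "prolong D l J t = gen_ideal (Rh (l + t)) (Sg D J t)"
  by (simp add: prolong_def Sg_def)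

lemma Sg_sub: "J \<subseteq> Rh l \<Longrightarrow> Sg D J t \<subseteq> Rh (l + t)"
proof
  fix x assume J: "J \<subseteq> Rh l" and "x \<in> Sg D J t"
  then obtain js g where x: "x = dapply D js g" "g \<in> J" "length js \<le> t" by (auto simp: Sg_def)
  have "x \<in> Rh (l + length js)" using x J by (auto intro: dapply_Rh)
  also have "\<dots> \<subseteq> Rh (l + t)" using x by (intro Rh_mono) simp
  finally show "x \<in> Rh (l + t)" .
qed

lemma Sg_mono: "t \<le> t' \<Longrightarrow> Sg D J t \<subseteq> Sg D J t'"
  unfolding Sg_def by (auto intro: le_trans)

lemma prolong_ideal: "J \<subseteq> Rh l \<Longrightarrow> is_ideal_in (Rh (l + t)) (prolong D l J t)"
  unfolding prolong_Sg by (intro gen_ideal_ideal Rh_subring Sg_sub)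

lemma prolong_mono: "t \<le> t' \<Longrightarrow> prolong D l J t \<subseteq> prolong D l J t'"
  unfolding prolong_Sg by (intro gen_ideal_mono Rh_mono Sg_mono) auto

lemma Sg_prolong: "Sg D J t \<subseteq> prolong D l J t"
  unfolding prolong_Sg by (rule gen_ideal_superset[OF Rh_subring])

lemma dderiv_prolong:
  assumes D: "diff_field D" and J: "J \<subseteq> Rh l" and x: "x \<in> prolong D l J t"
  shows "dderiv D j x \<in> prolong D l J (Suc t)"
proof -
  from x obtain F r where F: "finite F" "F \<subseteq> Sg D J t" "\<forall>s\<in>F. r s \<in> Rh (l + t)" "x = (\<Sum>s\<in>F. r s * s)"
    unfolding prolong_Sg gen_ideal_def by blast
  have I: "is_ideal_in (Rh (l + Suc t)) (prolong D l J (Suc t))" by (rule prolong_ideal[OF J])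
  have "dderiv D j x = (\<Sum>s\<in>F. dderiv D j (r s) * s + r s * dderiv D j s)"
    unfolding F(4) by (simp add: dderiv_sum[OF D] dderiv_mult[OF D])
  also have "\<dots> \<in> prolong D l J (Suc t)"
  proof (rule ideal_sum[OF I])
    fix s assume s: "s \<in> F"
    have rs: "r s \<in> Rh (l + t)" using F s by blast
    have ss: "s \<in> Sg D J t" using F s by blast
    have "dderiv D j (r s) \<in> Rh (l + Suc t)" using dderiv_Rh[OF rs] by simp
    moreover have "s \<in> prolong D l J (Suc t)"
      using ss Sg_mono[of t "Suc t" D J] Sg_prolong[of D J "Suc t" l] by auto
    moreover have "r s \<in> Rh (l + Suc t)" using rs Rh_mono[of "l + t" "l + Suc t"] by auto
    moreover have "dderiv D j s \<in> prolong D l J (Suc t)"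
    proof -
      from ss obtain js g where sg: "s = dapply D js g" "g \<in> J" "length js \<le> t" by (auto simp: Sg_def)
      have "dderiv D j s = dapply D (js @ [j]) g" by (simp add: sg dapply_snoc)
      moreover have "dapply D (js @ [j]) g \<in> Sg D J (Suc t)" unfolding Sg_def using sg
        by (intro CollectI exI[of _ "js @ [j]"] exI[of _ g]) simp
      ultimately show ?thesis using Sg_prolong[of D J "Suc t" l] by auto
    qed
    ultimately show "dderiv D j (r s) * s + r s * dderiv D j s \<in> prolong D l J (Suc t)"
      by (intro ideal_add[OF I] ideal_mult[OF I])
  qed
  finally show ?thesis .
qed

lemma dapply_prolong:
  assumes D: "diff_field D" and J: "J \<subseteq> Rh l" and x: "x \<in> prolong D l J t"
  shows "dapply D js x \<in> prolong D l J (t + length js)"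
proof (induction js rule: rev_induct)
  case Nil then show ?case using x by simp
next
  case (snoc j js)
  then show ?case using dderiv_prolong[OF D J snoc] by (simp add: dapply_snoc)
qed


definition sub :: "'a list \<Rightarrow> nat list \<Rightarrow> nat \<Rightarrow> 'a list" where
  "sub js cs i = map fst (filter (\<lambda>x. snd x = i) (zip js cs))"

definition Ch :: "nat \<Rightarrow> nat \<Rightarrow> nat list set" where
  "Ch n q = {cs. set cs \<subseteq> {..<q} \<and> length cs = n}"

lemma finite_Ch: "finite (Ch n q)"
  unfolding Ch_def by (rule finite_lists_length_eq) simp

lemma sub_Nil [simp]: "sub [] cs i = []" by (simp add: sub_def)

lemma sub_Cons: "sub (x # js) (c # cs) i = (if c = i then x # sub js cs i else sub js cs i)"
  by (simp add: sub_def)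

lemma sub_append: "length xs = length cs \<Longrightarrow> sub (xs @ ys) (cs @ ds) i = sub xs cs i @ sub ys ds i"
  by (simp add: sub_def)

lemma sub_snoc: "length cs = length js \<Longrightarrow> sub (js @ [j]) (cs @ [c]) i = sub js cs i @ (if c = i then [j] else [])"
  by (simp add: sub_append sub_Cons)

lemma sum_Ch_Suc:
  "(\<Sum>cs\<in>Ch (Suc n) q. g cs) = (\<Sum>cs\<in>Ch n q. \<Sum>c<q. g (cs @ [c]))"
proof -
  have bij: "Ch (Suc n) q = (\<lambda>(cs, c). cs @ [c]) ` (Ch n q \<times> {..<q})"
  proof
    show "(\<lambda>(cs, c). cs @ [c]) ` (Ch n q \<times> {..<q}) \<subseteq> Ch (Suc n) q" by (auto simp: Ch_def)
    show "Ch (Suc n) q \<subseteq> (\<lambda>(cs, c). cs @ [c]) ` (Ch n q \<times> {..<q})"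
    proof
      fix cs assume cs: "cs \<in> Ch (Suc n) q"
      then have "cs \<noteq> []" by (auto simp: Ch_def)
      then have "cs = butlast cs @ [last cs]" by simp
      moreover have "butlast cs \<in> Ch n q"
        using cs \<open>cs \<noteq> []\<close> by (auto simp: Ch_def dest: in_set_butlastD)
      moreover have "last cs \<in> {..<q}"
        using cs last_in_set[OF \<open>cs \<noteq> []\<close>] unfolding Ch_def by blast
      ultimately show "cs \<in> (\<lambda>(cs, c). cs @ [c]) ` (Ch n q \<times> {..<q})"
        by (metis (no_types, lifting) SigmaI case_prod_conv image_eqI)
    qed
  qed
  have inj: "inj_on (\<lambda>(cs, c). cs @ [c]) (Ch n q \<times> {..<q})"
    by (auto simp: inj_on_def Ch_def)
  show ?thesis
    unfolding bij sum.reindex[OF inj] by (simp add: sum.cartesian_product split_def)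
qed

lemma Ch_0: "Ch 0 q = {[]}" by (auto simp: Ch_def)

lemma mset_sub_sum:
  "length cs = length js \<Longrightarrow> set cs \<subseteq> {..<q} \<Longrightarrow> (\<Sum>i<q. mset (sub js cs i)) = mset js"
proof (induction cs js rule: list_induct2)
  case Nil then show ?case by simp
next
  case (Cons c cs x js)
  have "(\<Sum>i<q. mset (sub (x # js) (c # cs) i)) = (\<Sum>i<q. mset (sub js cs i) + (if c = i then {#x#} else {#}))"
    by (intro sum.cong) (auto simp: sub_Cons)
  also have "\<dots> = mset js + {#x#}"
    using Cons by (simp add: sum.distrib sum.delta)
  finally show ?case by simp
qed

lemma length_sub_sum:
  "length cs = length js \<Longrightarrow> set cs \<subseteq> {..<q} \<Longrightarrow> (\<Sum>i<q. length (sub js cs i)) = length js"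
proof -
  assume a: "length cs = length js" "set cs \<subseteq> {..<q}"
  have "(\<Sum>i<q. length (sub js cs i)) = (\<Sum>i<q. size (mset (sub js cs i)))" by simp
  also have "\<dots> = size (\<Sum>i<q. mset (sub js cs i))" by (induction q) auto
  also have "\<dots> = length js" using mset_sub_sum[OF a] by simp
  finally show ?thesis .
qed

lemma sub_replicate: "sub ts (replicate (length ts) c) i = (if c = i then ts else [])"
  by (induction ts) (auto simp: sub_Cons)

lemma sub_witness:
  assumes "length ts = k"
  shows "sub (concat (replicate p ts)) (concat (map (\<lambda>i. replicate k i) [0..<p])) i = (if i < p then ts else [])"
proof (induction p)
  case 0 then show ?case by simp
next
  case (Suc p)
  have e1: "concat (replicate (Suc p) ts) = concat (replicate p ts) @ ts"
    by (simp add: replicate_append_same[symmetric])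
  have l: "length (concat (replicate p ts)) = length (concat (map (\<lambda>i. replicate k i) [0..<p]))"
    using assms by (simp add: length_concat o_def map_replicate_const sum_list_replicate)
  show ?case unfolding e1 upt_Suc using Suc assms
    by (simp add: sub_append[OF l] sub_replicate[of ts, unfolded assms])
qed

lemma witness_Ch: "concat (map (\<lambda>i. replicate k i) [0..<p]) \<in> Ch (k * p) p"
  by (auto simp: Ch_def length_concat o_def map_replicate_const sum_list_replicate)

lemma sum_le_all_eq:
  fixes g :: "'a \<Rightarrow> nat"
  assumes "finite A" "\<forall>i\<in>A. g i \<le> c" "sum g A = card A * c"
  shows "\<forall>i\<in>A. g i = c"
proof (rule ccontr)
  assume "\<not> (\<forall>i\<in>A. g i = c)"
  then have "\<exists>i\<in>A. g i < c" using assms(2) by force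
  then have "sum g A < sum (\<lambda>_. c) A" using assms(1,2) by (intro sum_strict_mono_ex1) auto
  then show False using assms(3) by simp
qed

lemma sum_ge_all_eq:
  fixes g :: "'a \<Rightarrow> nat"
  assumes "finite A" "\<forall>i\<in>A. c \<le> g i" "sum g A = card A * c"
  shows "\<forall>i\<in>A. g i = c"
proof (rule ccontr)
  assume "\<not> (\<forall>i\<in>A. g i = c)"
  then have "\<exists>i\<in>A. c < g i" using assms(2) by force
  then have "sum (\<lambda>_. c) A < sum g A" using assms(1,2) by (intro sum_strict_mono_ex1) auto
  then show False using assms(3) by simp
qed

lemma digits_unique:
  fixes a b :: "nat \<Rightarrow> nat"
  assumes "\<forall>d<n. a d < B" "\<forall>d<n. b d < B" "(\<Sum>d<n. a d * B ^ d) = (\<Sum>d<n. b d * B ^ d)"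
  shows "\<forall>d<n. a d = b d"
  using assms
proof (induction n arbitrary: a b)
  case 0 then show ?case by simp
next
  case (Suc n)
  have ea: "(\<Sum>d<Suc n. a d * B ^ d) = a 0 + B * (\<Sum>d<n. a (Suc d) * B ^ d)"
    unfolding sum.lessThan_Suc_shift by (simp add: sum_distrib_left ac_simps del: sum.lessThan_Suc)
  have eb: "(\<Sum>d<Suc n. b d * B ^ d) = b 0 + B * (\<Sum>d<n. b (Suc d) * B ^ d)"
    unfolding sum.lessThan_Suc_shift by (simp add: sum_distrib_left ac_simps del: sum.lessThan_Suc)
  have a0: "a 0 < B" and b0: "b 0 < B" using Suc.prems by auto
  from Suc.prems(3) have E: "a 0 + B * (\<Sum>d<n. a (Suc d) * B ^ d) = b 0 + B * (\<Sum>d<n. b (Suc d) * B ^ d)"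
    unfolding ea eb .
  then have "(a 0 + B * (\<Sum>d<n. a (Suc d) * B ^ d)) mod B = (b 0 + B * (\<Sum>d<n. b (Suc d) * B ^ d)) mod B" by simp
  then have z: "a 0 = b 0" using a0 b0 by simp
  with E have "B * (\<Sum>d<n. a (Suc d) * B ^ d) = B * (\<Sum>d<n. b (Suc d) * B ^ d)" by simp
  moreover have "B \<noteq> 0" using a0 by simp
  ultimately have eq: "(\<Sum>d<n. a (Suc d) * B ^ d) = (\<Sum>d<n. b (Suc d) * B ^ d)" by simp
  have ha: "\<forall>d<n. a (Suc d) < B" using Suc.prems(1) by simp
  have hb: "\<forall>d<n. b (Suc d) < B" using Suc.prems(2) by simp
  have "\<forall>d<n. a (Suc d) = b (Suc d)"
    using Suc.IH[of "\<lambda>d. a (Suc d)" "\<lambda>d. b (Suc d)", OF ha hb eq] .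
  then show ?case using z by (auto simp: less_Suc_eq_0_disj)
qed

definition Wt :: "'a list \<Rightarrow> nat \<Rightarrow> 'a multiset \<Rightarrow> nat" where
  "Wt xs B M = (\<Sum>d<length xs. count M (xs ! d) * B ^ d)"

lemma Wt_add: "Wt xs B (M + N) = Wt xs B M + Wt xs B N"
  by (simp add: Wt_def sum.distrib distrib_right)

lemma Wt_empty: "Wt xs B {#} = 0" by (simp add: Wt_def)

lemma Wt_sum: "Wt xs B (\<Sum>i\<in>A. M i) = (\<Sum>i\<in>A. Wt xs B (M i))"
  by (induction A rule: infinite_finite_induct) (auto simp: Wt_add Wt_empty)

lemma Wt_inj:
  assumes "set xs = UNIV" "size M < B" "size N < B" "Wt xs B M = Wt xs B N"
  shows "M = N"
proof (rule multiset_eqI)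
  fix x
  have ha: "\<forall>d<length xs. count M (xs ! d) < B"
    using le_less_trans[OF count_le_size assms(2)] by simp
  have hb: "\<forall>d<length xs. count N (xs ! d) < B"
    using le_less_trans[OF count_le_size assms(3)] by simp
  have "\<forall>d<length xs. count M (xs ! d) = count N (xs ! d)"
    by (rule digits_unique[OF ha hb assms(4)[unfolded Wt_def]])
  moreover have "x \<in> set xs" using assms(1) by simp
  then obtain d where "d < length xs" "xs ! d = x" by (auto simp: in_set_conv_nth)
  ultimately show "count M x = count N x" by auto
qed

lemma mset_concat_replicate: "mset (concat (replicate p ts)) = (\<Sum>i<p. mset ts)"
  by (induction p) auto


lemma dderiv_one: "diff_field D \<Longrightarrow> dderiv D j 1 = 0"
  using dderiv_const[of D j 1] by (simp add: diff_field_D1)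

lemma dderiv_prod:
  fixes q :: nat
  assumes D: "diff_field D"
  shows "dderiv D j (\<Prod>i<q. F i) = (\<Sum>c<q. \<Prod>i<q. if i = c then dderiv D j (F i) else F i)"
proof (induction q)
  case 0 then show ?case by (simp add: dderiv_one[OF D])
next
  case (Suc q)
  have "dderiv D j (\<Prod>i<Suc q. F i) = dderiv D j ((\<Prod>i<q. F i) * F q)" by simp
  also have "\<dots> = (\<Sum>c<q. \<Prod>i<q. if i = c then dderiv D j (F i) else F i) * F q + (\<Prod>i<q. F i) * dderiv D j (F q)"
    by (simp add: dderiv_mult[OF D] Suc.IH)
  also have "\<dots> = (\<Sum>c<Suc q. \<Prod>i<Suc q. if i = c then dderiv D j (F i) else F i)"
  proof -
    have "(\<Sum>c<q. \<Prod>i<q. if i = c then dderiv D j (F i) else F i) * F q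
        = (\<Sum>c<q. \<Prod>i<Suc q. if i = c then dderiv D j (F i) else F i)"
      by (simp add: sum_distrib_right)
    moreover have "(\<Prod>i<q. F i) * dderiv D j (F q) = (\<Prod>i<Suc q. if i = q then dderiv D j (F i) else F i)"
      by (simp add: prod.lessThan_Suc)
    ultimately show ?thesis by (simp only: sum.lessThan_Suc)
  qed
  finally show ?case .
qed

lemma expansion:
  assumes D: "diff_field D"
  shows "dapply D js (\<Prod>i<q. F i) = (\<Sum>cs\<in>Ch (length js) q. \<Prod>i<q. dapply D (sub js cs i) (F i))"
proof (induction js rule: rev_induct)
  case Nil then show ?case by (simp add: Ch_0)
next
  case (snoc j js)
  have "dapply D (js @ [j]) (\<Prod>i<q. F i) = dderiv D j (\<Sum>cs\<in>Ch (length js) q. \<Prod>i<q. dapply D (sub js cs i) (F i))"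
    by (simp add: dapply_snoc snoc.IH)
  also have "\<dots> = (\<Sum>cs\<in>Ch (length js) q. \<Sum>c<q. \<Prod>i<q. if i = c then dderiv D j (dapply D (sub js cs i) (F i)) else dapply D (sub js cs i) (F i))"
    by (simp add: dderiv_sum[OF D] dderiv_prod[OF D])
  also have "\<dots> = (\<Sum>cs\<in>Ch (length js) q. \<Sum>c<q. \<Prod>i<q. dapply D (sub (js @ [j]) (cs @ [c]) i) (F i))"
  proof (intro sum.cong refl prod.cong)
    fix cs c i assume cs: "cs \<in> Ch (length js) q"
    then have l: "length cs = length js" by (simp add: Ch_def)
    show "(if i = c then dderiv D j (dapply D (sub js cs i) (F i)) else dapply D (sub js cs i) (F i))
        = dapply D (sub (js @ [j]) (cs @ [c]) i) (F i)"
      by (simp add: sub_snoc[OF l] dapply_snoc)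
  qed
  also have "\<dots> = (\<Sum>cs\<in>Ch (length (js @ [j])) q. \<Prod>i<q. dapply D (sub (js @ [j]) cs i) (F i))"
    by (simp add: sum_Ch_Suc)
  finally show ?case .
qed

lemma length_sub_le: "length (sub js cs i) \<le> length js"
  unfolding sub_def by (metis length_filter_le length_map length_zip min.bounded_iff order_refl order_trans)

lemma subring_prod: "subring A \<Longrightarrow> (\<And>i. i \<in> S \<Longrightarrow> G i \<in> A) \<Longrightarrow> prod G S \<in> A"
  by (induction S rule: infinite_finite_induct) (auto intro: subring_1 subring_mult)

lemma ideal_prod_one:
  assumes A: "subring A" and I: "is_ideal_in A I" and fin: "finite S" and aa: "aa \<in> S"
    and inI: "G aa \<in> I" and inA: "\<And>i. i \<in> S \<Longrightarrow> G i \<in> A"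
  shows "prod G S \<in> I"
proof -
  have "prod G S = G aa * prod G (S - {aa})" using fin aa by (rule prod.remove)
  moreover have "prod G (S - {aa}) \<in> A"
    using inA by (intro subring_prod[OF A]) auto
  ultimately show ?thesis using ideal_mult2[OF I _ inI] by simp
qed



lemma Pk_mono:
  assumes "k' \<le> k"
  shows "radical_in (Rh (l + k' * p + 1)) (prolong D l J (k' * p + 1))
       \<subseteq> radical_in (Rh (l + k * p + 1)) (prolong D l J (k * p + 1))"
proof -
  have "k' * p \<le> k * p" using assms by (rule mult_le_mono1)
  then show ?thesis by (intro radical_mono Rh_mono prolong_mono) auto
qed

lemma inv_of_nat_dpoly:
  assumes "N > 0"
  shows "Poly_Mapping.single 0 (inverse (of_nat N :: 'k::field_char_0)) * (of_nat N :: ('k, 'm, 'n) dpoly) = 1"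
proof -
  have e: "(of_nat N :: ('k, 'm, 'n) dpoly) = Poly_Mapping.single 0 (of_nat N)" by (rule single_of_nat[symmetric])
  have "inverse (of_nat N :: 'k) * of_nat N = 1" using assms by simp
  then show ?thesis unfolding e mult_single by simp
qed

lemma key:
  fixes D :: "'m::finite \<Rightarrow> 'k::field_char_0 \<Rightarrow> 'k"
    and J :: "('k, 'm, 'n) dpoly set"
  assumes D: "diff_field D" and J: "J \<subseteq> Rh l" and p: "p > 0"
    and f: "f \<in> Rh l" and fp: "f ^ p \<in> prolong D l J 1"
  shows "\<forall>ts. length ts \<le> k \<longrightarrow> dapply D ts f \<in> radical_in (Rh (l + k * p + 1)) (prolong D l J (k * p + 1))"
proof (induction k rule: less_induct)
  case (less k)
  define A where "A = (Rh (l + k * p + 1) :: ('k, 'm, 'n) dpoly set)"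
  define P where "P = radical_in A (prolong D l J (k * p + 1))"
  have A: "subring A" unfolding A_def by (rule Rh_subring)
  have AE: "Rh (l + (k * p + 1)) = A" unfolding A_def by (simp add: add.assoc)
  have I: "is_ideal_in A (prolong D l J (k * p + 1))"
    using prolong_ideal[OF J, where D=D and t="k * p + 1"] unfolding AE .
  have PI: "is_ideal_in A P" unfolding P_def by (rule radical_ideal[OF A I])
  have IP: "prolong D l J (k * p + 1) \<subseteq> P" unfolding P_def by (rule radical_sub[OF I])
  have small: "dapply D ts f \<in> P" if "length ts < k" for ts
  proof -
    have "dapply D ts f \<in> radical_in (Rh (l + length ts * p + 1)) (prolong D l J (length ts * p + 1))"
      using less.IH[OF that] by blast
    also have "\<dots> \<subseteq> P" unfolding P_def A_def using that by (intro Pk_mono) simp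
    finally show ?thesis .
  qed
  have inA: "dapply D ts f \<in> A" if "length ts \<le> k * p" for ts
  proof -
    have "dapply D ts f \<in> Rh (l + length ts)" by (rule dapply_Rh[OF f])
    also have "\<dots> \<subseteq> A" unfolding A_def using that by (intro Rh_mono) simp
    finally show ?thesis .
  qed
  obtain xs :: "'m list" where xs: "set xs = UNIV" "distinct xs"
    using finite_distinct_list[of "UNIV :: 'm set"] by auto
  define B where "B = Suc k"
  define W where "W = Wt xs B"
  define Bnd where "Bnd = (\<Sum>d<length xs. k * B ^ d)"
  have Wle: "W (mset ts) \<le> Bnd" if "length ts = k" for ts :: "'m list"
    unfolding W_def Wt_def Bnd_def
    by (intro sum_mono mult_le_mono1) (metis count_le_size size_mset that)
  have inner: "\<forall>ts. length ts = k \<longrightarrow> Bnd - W (mset ts) = n \<longrightarrow> dapply D ts f \<in> P" for n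
  proof (induction n rule: less_induct)
    case (less n)
    show ?case
    proof (intro allI impI)
      fix ts :: "'m list" assume ts: "length ts = k" and n: "Bnd - W (mset ts) = n"
      have bigger: "dapply D ts' f \<in> P" if "length ts' = k" "W (mset ts') > W (mset ts)" for ts'
      proof -
        have "Bnd - W (mset ts') < n" using n Wle[OF that(1)] that(2) by linarith
        then show ?thesis using less.IH that(1) by blast
      qed
      define js where "js = concat (replicate p ts)"
      have ljs: "length js = k * p" unfolding js_def using ts
        by (simp add: length_concat o_def sum_list_replicate)
      define \<theta> where "\<theta> = dapply D ts f"
      define T where "T cs = (\<Prod>i<p. dapply D (sub js cs i) f)" for cs
      define Ch0 where "Ch0 = Ch (k * p) p"
      define Good where "Good = {cs \<in> Ch0. \<forall>i<p. mset (sub js cs i) = mset ts}"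
      have finCh: "finite Ch0" unfolding Ch0_def by (rule finite_Ch)
      have GoodCh: "Good \<subseteq> Ch0" unfolding Good_def by blast
      have X: "dapply D js (f ^ p) \<in> P"
      proof -
        have "dapply D js (f ^ p) \<in> prolong D l J (1 + length js)" by (rule dapply_prolong[OF D J fp])
        then show ?thesis using IP ljs by (auto simp: add.commute)
      qed
      have Xexp: "dapply D js (f ^ p) = (\<Sum>cs\<in>Ch0. T cs)"
      proof -
        have "f ^ p = (\<Prod>i<p. f)" by simp
        then show ?thesis unfolding Ch0_def T_def using expansion[OF D, where js=js and q=p and F="\<lambda>_. f"] ljs by simp
      qed
      have split: "(\<Sum>cs\<in>Ch0. T cs) = (\<Sum>cs\<in>Good. T cs) + (\<Sum>cs\<in>Ch0 - Good. T cs)"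
        using sum.subset_diff[OF GoodCh finCh, of T] by (simp add: add.commute)
      have goodT: "(\<Sum>cs\<in>Good. T cs) = of_nat (card Good) * \<theta> ^ p"
      proof -
        have "T cs = \<theta> ^ p" if "cs \<in> Good" for cs
        proof -
          have "T cs = (\<Prod>i<p. \<theta>)" unfolding T_def \<theta>_def
            using that unfolding Good_def by (intro prod.cong refl dapply_mset[OF D]) auto
          then show ?thesis by simp
        qed
        then show ?thesis by simp
      qed
      have badT: "(\<Sum>cs\<in>Ch0 - Good. T cs) \<in> P"
      proof (rule ideal_sum[OF PI])
        fix cs assume cs: "cs \<in> Ch0 - Good"
        have lcs: "length cs = length js" and scs: "set cs \<subseteq> {..<p}"
          using cs ljs unfolding Ch0_def Ch_def by auto
        have "\<exists>i<p. dapply D (sub js cs i) f \<in> P"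
        proof (rule ccontr)
          assume "\<not> (\<exists>i<p. dapply D (sub js cs i) f \<in> P)"
          then have notin: "\<forall>i<p. dapply D (sub js cs i) f \<notin> P" by blast
          have geq: "\<forall>i\<in>{..<p}. k \<le> length (sub js cs i)"
            using notin small by (meson lessThan_iff not_le_imp_less)
          have lsum: "(\<Sum>i<p. length (sub js cs i)) = card {..<p} * k"
            using length_sub_sum[OF lcs scs] ljs by simp
          have leq: "\<forall>i\<in>{..<p}. length (sub js cs i) = k"
            by (rule sum_ge_all_eq[OF _ geq lsum]) simp
          have wle: "\<forall>i\<in>{..<p}. W (mset (sub js cs i)) \<le> W (mset ts)"
            using notin bigger leq by (meson lessThan_iff not_le_imp_less)
          have "(\<Sum>i<p. W (mset (sub js cs i))) = W (\<Sum>i<p. mset (sub js cs i))"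
            unfolding W_def by (simp add: Wt_sum)
          also have "\<dots> = W (mset js)" using mset_sub_sum[OF lcs scs] by simp
          also have "\<dots> = card {..<p} * W (mset ts)"
            unfolding js_def mset_concat_replicate W_def by (simp add: Wt_sum)
          finally have wsum: "(\<Sum>i<p. W (mset (sub js cs i))) = card {..<p} * W (mset ts)" .
          have weq: "\<forall>i\<in>{..<p}. W (mset (sub js cs i)) = W (mset ts)"
            by (rule sum_le_all_eq[OF _ wle wsum]) simp
          have "\<forall>i<p. mset (sub js cs i) = mset ts"
          proof (intro allI impI)
            fix i assume i: "i < p"
            show "mset (sub js cs i) = mset ts"
            proof (rule Wt_inj[OF xs(1)])
              show "size (mset (sub js cs i)) < B" using leq i unfolding B_def by simp
              show "size (mset ts) < B" using ts unfolding B_def by simp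
              show "Wt xs B (mset (sub js cs i)) = Wt xs B (mset ts)" using weq i unfolding W_def by simp
            qed
          qed
          then have "cs \<in> Good" using cs unfolding Good_def by blast
          then show False using cs by blast
        qed
        then obtain aa where aa: "aa < p" "dapply D (sub js cs aa) f \<in> P" by blast
        show "T cs \<in> P" unfolding T_def
        proof (rule ideal_prod_one[where G="\<lambda>i. dapply D (sub js cs i) f" and aa=aa, OF A PI])
          show "aa \<in> {..<p}" using aa by simp
          show "dapply D (sub js cs aa) f \<in> P" by (rule aa(2))
          fix i show "dapply D (sub js cs i) f \<in> A"
            using inA length_sub_le[of js cs i] ljs by simp
        qed simp
      qed
      have Npos: "card Good > 0"
      proof -
        define cs0 where "cs0 = concat (map (\<lambda>i. replicate k i) [0..<p])"
        have "cs0 \<in> Good"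
          unfolding Good_def Ch0_def cs0_def js_def
          using witness_Ch[of k p] sub_witness[OF ts, of p] by auto
        then show ?thesis using finCh GoodCh card_gt_0_iff finite_subset by blast
      qed
      have NP: "of_nat (card Good) * \<theta> ^ p \<in> P"
      proof -
        have "of_nat (card Good) * \<theta> ^ p = dapply D js (f ^ p) - (\<Sum>cs\<in>Ch0 - Good. T cs)"
          using Xexp split goodT by simp
        then show ?thesis using ideal_diff[OF A PI X badT] by simp
      qed
      have "\<theta> ^ p = Poly_Mapping.single 0 (inverse (of_nat (card Good))) * (of_nat (card Good) * \<theta> ^ p)"
        unfolding mult.assoc[symmetric] inv_of_nat_dpoly[OF Npos] by simp
      also have "\<dots> \<in> P"
        by (rule ideal_mult[OF PI _ NP]) (simp add: A_def Rh_single0)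
      finally have tp: "\<theta> ^ p \<in> P" .
      have tA: "\<theta> \<in> A" unfolding \<theta>_def using inA ts p by simp
      have "\<theta> \<in> radical_in A P" unfolding radical_in_def using tA tp p by blast
      then show "dapply D ts f \<in> P" unfolding \<theta>_def P_def using radical_radical by blast
    qed
  qed
  show ?case
  proof (intro allI impI)
    fix ts :: "'m list" assume "length ts \<le> k"
    then consider "length ts < k" | "length ts = k" by linarith
    then have "dapply D ts f \<in> P"
      by cases (use small inner in blast)+
    then show "dapply D ts f \<in> radical_in (Rh (l + k * p + 1)) (prolong D l J (k * p + 1))"
      unfolding P_def A_def .
  qed
qed


theorem lemma3p1:
  fixes D :: "'m::finite \<Rightarrow> 'k::field_char_0 \<Rightarrow> 'k"
    and J :: "('k, 'm, 'n::finite) dpoly set"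
    and l p :: nat
  assumes "diff_field D"
    and "is_ideal_in (Rh l) J"
    and "p > 0"
    and "ideal_power_in (Rh l) (dprime D l J) p \<subseteq> prolong D l J 1"
  shows "\<forall>k::nat. radical_in (Rh (l + k)) (prolong D l (dprime D l J) k)
                   \<subseteq> radical_in (Rh (l + k * p + 1)) (prolong D l J (k * p + 1))"
proof
  fix k :: nat
  have D: "diff_field D" by (rule assms(1))
  have kp: "k \<le> k * p" using assms(3) by simp
  have J: "J \<subseteq> Rh l" using assms(2) by (rule ideal_sub)
  define A where "A = (Rh (l + k * p + 1) :: ('k, 'm, 'n) dpoly set)"
  define P where "P = radical_in A (prolong D l J (k * p + 1))"
  have RA: "Rh (l + k) \<subseteq> A" unfolding A_def by (rule Rh_mono) (use kp in linarith)
  have Asr: "subring A" unfolding A_def by (rule Rh_subring)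
  have AE: "Rh (l + (k * p + 1)) = A" unfolding A_def by (simp add: add.assoc)
  have I: "is_ideal_in A (prolong D l J (k * p + 1))"
    using prolong_ideal[OF J, where D=D and t="k * p + 1"] unfolding AE .
  have PI: "is_ideal_in A P" unfolding P_def by (rule radical_ideal[OF Asr I])
  have hyp: "f \<in> Rh l \<and> f ^ p \<in> prolong D l J 1" if f: "f \<in> dprime D l J" for f
  proof
    show "f \<in> Rh l" using f unfolding dprime_def by blast
    have "prod_list (replicate p f) \<in> {prod_list xs | xs. length xs = p \<and> set xs \<subseteq> dprime D l J}"
      using f by (intro CollectI exI[of _ "replicate p f"]) auto
    also have "\<dots> \<subseteq> ideal_power_in (Rh l) (dprime D l J) p"
      unfolding ideal_power_in_def by (rule gen_ideal_superset[OF Rh_subring])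
    finally show "f ^ p \<in> prolong D l J 1" using assms(4) by auto
  qed
  have SgP: "Sg D (dprime D l J) k \<subseteq> P"
  proof
    fix x assume "x \<in> Sg D (dprime D l J) k"
    then obtain js g where x: "x = dapply D js g" "g \<in> dprime D l J" "length js \<le> k"
      unfolding Sg_def by blast
    from hyp[OF x(2)] have g: "g \<in> Rh l" "g ^ p \<in> prolong D l J 1" by auto
    show "x \<in> P" unfolding P_def A_def x(1)
      using key[OF D J assms(3) g, of k] x(3) by blast
  qed
  have "prolong D l (dprime D l J) k \<subseteq> gen_ideal A (Sg D (dprime D l J) k)"
    unfolding prolong_Sg by (intro gen_ideal_mono RA) auto
  also have "\<dots> \<subseteq> P" by (rule gen_ideal_least[OF PI SgP])
  finally have sub: "prolong D l (dprime D l J) k \<subseteq> P" .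
  have "radical_in (Rh (l + k)) (prolong D l (dprime D l J) k) \<subseteq> radical_in A P"
    by (intro radical_mono RA sub)
  also have "\<dots> \<subseteq> P" unfolding P_def by (rule radical_radical)
  finally show "radical_in (Rh (l + k)) (prolong D l (dprime D l J) k)
                   \<subseteq> radical_in (Rh (l + k * p + 1)) (prolong D l J (k * p + 1))"
    unfolding P_def A_def .
qed


end
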